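(* Let $M$ be a matroid on $S$ and $N$ a matroid on $T$ with $S\cap T=\emptyset$, and let $L=M\mathbin{\Box} N$. Then for all $A\subseteq S\cup T$, $$\rho_L(A)=\rho_M(A\cap S)+\rho_N(A\cap T)+\min\{\lambda_M(A\cap S),\ \nu_N(A\cap T)\}.$$
   Context: For a matroid $M$ on $S$ write $\rho_M$ for rank, $\rho(M)=\rho_M(S)$, $\nu_M(A)=|A|-\rho_M(A)$ (nullity), $\lambda_M(A)=\rho(M)-\rho_M(A)$ (rank-lack). For matroids $M$ on $S$ and $N$ on $T$ with $S\cap T=\emptyset$, the free product $M\mathbin{\Box} N$ is the matroid on $S\cup T$ whose independent sets are those $A$ with $A\cap S$ independent in $M$ and $\lambda_M(A\cap S)\geq\nu_N(A\cap T)$. *)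

theory Defs
  imports Main
begin

definition matroid :: "'a set \<Rightarrow> ('a set \<Rightarrow> bool) \<Rightarrow> bool" where
  "matroid E indep \<longleftrightarrow>
     finite E \<and> indep {} \<and>
     (\<forall>X. indep X \<longrightarrow> X \<subseteq> E) \<and>
     (\<forall>X Y. indep Y \<and> X \<subseteq> Y \<longrightarrow> indep X) \<and>
     (\<forall>X Y. indep X \<and> indep Y \<and> card X < card Y \<longrightarrow> (\<exists>y\<in>Y - X. indep (insert y X)))"

definition rank :: "('a set \<Rightarrow> bool) \<Rightarrow> 'a set \<Rightarrow> nat" where
  "rank indep A = Max (card ` {X. X \<subseteq> A \<and> indep X})"

definition nullity :: "('a set \<Rightarrow> bool) \<Rightarrow> 'a set \<Rightarrow> nat" where
  "nullity indep A = card A - rank indep A"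

definition ranklack :: "'a set \<Rightarrow> ('a set \<Rightarrow> bool) \<Rightarrow> 'a set \<Rightarrow> nat" where
  "ranklack E indep A = rank indep E - rank indep A"

definition free_product_indep ::
  "'a set \<Rightarrow> ('a set \<Rightarrow> bool) \<Rightarrow> 'a set \<Rightarrow> ('a set \<Rightarrow> bool) \<Rightarrow> 'a set \<Rightarrow> bool" where
  "free_product_indep S indM T indN A \<longleftrightarrow>
     A \<subseteq> S \<union> T \<and> indM (A \<inter> S) \<and>
     ranklack S indM (A \<inter> S) \<ge> nullity indN (A \<inter> T)"

end

theory Submission
  imports Defs
begin

lemma rk_ge:
  assumes "finite A" "X \<subseteq> A" "ind X"
  shows "card X \<le> rank ind A"
proof -
  have "finite {X. X \<subseteq> A \<and> ind X}" using assms(1) by simp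
  then show ?thesis unfolding rank_def using assms by (intro Max_ge) auto
qed

lemma rk_obtain:
  assumes "finite A" "ind {}"
  obtains X where "X \<subseteq> A" "ind X" "card X = rank ind A"
proof -
  have f: "finite {X. X \<subseteq> A \<and> ind X}" using assms(1) by simp
  have "{} \<in> {X. X \<subseteq> A \<and> ind X}" using assms by simp
  then have "rank ind A \<in> card ` {X. X \<subseteq> A \<and> ind X}"
    unfolding rank_def using f by (intro Max_in) auto
  then show ?thesis using that by auto
qed

lemma rk_le_card:
  assumes "finite A" "ind {}"
  shows "rank ind A \<le> card A"
proof -
  obtain X where "X \<subseteq> A" "ind X" "card X = rank ind A"
    using rk_obtain[of A ind] assms by blast
  then show ?thesis using assms(1) card_mono by metis
qed

lemma rk_indep':
  assumes "finite X" "ind X" "ind {}"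
  shows "rank ind X = card X"
  using rk_ge[of X X ind] rk_le_card[of X ind] assms by simp

lemma rk_mono:
  assumes "finite Z" "Y \<subseteq> Z" "ind {}"
  shows "rank ind Y \<le> rank ind Z"
proof -
  obtain X where "X \<subseteq> Y" "ind X" "card X = rank ind Y"
    using rk_obtain[of Y ind] assms finite_subset by blast
  then show ?thesis using rk_ge[of Z X ind] assms by auto
qed

lemma rk_sub:
  assumes "matroid E ind" "finite Z" "Y \<subseteq> Z"
  shows "rank ind Z \<le> rank ind Y + card (Z - Y)"
proof -
  have e: "ind {}" and dc: "\<And>X Y. ind Y \<Longrightarrow> X \<subseteq> Y \<Longrightarrow> ind X"
    using assms(1) unfolding matroid_def by blast+
  obtain B where B: "B \<subseteq> Z" "ind B" "card B = rank ind Z"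
    using rk_obtain[of Z ind] assms(2) e by blast
  have fY: "finite Y" using assms finite_subset by blast
  have "card (B \<inter> Y) \<le> rank ind Y"
    using rk_ge[OF fY, of "B \<inter> Y" ind] dc[OF B(2)] by auto
  moreover have "card B \<le> card (B \<inter> Y) + card (Z - Y)"
  proof -
    have "B \<subseteq> (B \<inter> Y) \<union> (Z - Y)" using B by auto
    then have "card B \<le> card ((B \<inter> Y) \<union> (Z - Y))"
      using assms(2) fY by (intro card_mono) auto
    also have "\<dots> \<le> card (B \<inter> Y) + card (Z - Y)" by (rule card_Un_le)
    finally show ?thesis .
  qed
  ultimately show ?thesis using B by linarith
qed

theorem proposition3p4:
  fixes S T :: "'a set" and indM indN :: "'a set \<Rightarrow> bool" and A :: "'a set"
  assumes "matroid S indM" and "matroid T indN" and "S \<inter> T = {}"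
    and "A \<subseteq> S \<union> T"
  shows "rank (free_product_indep S indM T indN) A =
           rank indM (A \<inter> S) + rank indN (A \<inter> T)
           + min (ranklack S indM (A \<inter> S)) (nullity indN (A \<inter> T))"
proof -
  define L where "L = free_product_indep S indM T indN"
  define AS where "AS = A \<inter> S"
  define AT where "AT = A \<inter> T"
  have fS: "finite S" and eM: "indM {}" and dM: "\<And>X Y. indM Y \<Longrightarrow> X \<subseteq> Y \<Longrightarrow> indM X"
    using assms(1) unfolding matroid_def by blast+
  have fT: "finite T" and eN: "indN {}" and dN: "\<And>X Y. indN Y \<Longrightarrow> X \<subseteq> Y \<Longrightarrow> indN X"
    using assms(2) unfolding matroid_def by blast+
  have fA: "finite A" using assms(4) fS fT finite_subset by blast
  have fAS: "finite AS" and fAT: "finite AT" using fA AS_def AT_def by auto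
  have eL: "L {}" unfolding L_def free_product_indep_def nullity_def
    using eM by simp
  have rASS: "rank indM AS \<le> rank indM S" using rk_mono[of S AS indM] fS eM AS_def by auto
  have rATc: "rank indN AT \<le> card AT" using rk_le_card[of AT indN] fAT eN by simp
  define k where "k = min (rank indM S - rank indM AS) (card AT - rank indN AT)"
  have goal: "rank L A = rank indM AS + rank indN AT + k"
  proof (rule antisym)
    obtain X where X: "X \<subseteq> A" "L X" "card X = rank L A"
      using rk_obtain[of A L] fA eL by blast
    define XS where "XS = X \<inter> S"
    define XT where "XT = X \<inter> T"
    have fX: "finite X" using X fA finite_subset by blast
    have cX: "card X = card XS + card XT"
    proof -
      have "X = XS \<union> XT" using X assms(4) XS_def XT_def by auto
      moreover have "XS \<inter> XT = {}" using assms(3) XS_def XT_def by auto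
      ultimately show ?thesis using fX card_Un_disjoint[of XS XT]
        by (metis XS_def XT_def finite_Int)
    qed
    have iXS: "indM XS" using X(2) unfolding L_def free_product_indep_def XS_def by blast
    have lam: "nullity indN XT \<le> ranklack S indM XS"
      using X(2) unfolding L_def free_product_indep_def XS_def XT_def by blast
    have fXS: "finite XS" and fXT: "finite XT" using fX XS_def XT_def by auto
    have a1: "card XS \<le> rank indM AS" using rk_ge[of AS XS indM] fAS iXS X(1) XS_def AS_def by auto
    have a2: "rank indM XS = card XS" using rk_indep'[of XS indM] fXS iXS eM by simp
    have a3: "rank indN XT \<le> card XT" using rk_le_card[of XT indN] fXT eN by simp
    have sub: "XT \<subseteq> AT" using X(1) XT_def AT_def by auto
    have a4: "rank indN XT \<le> rank indN AT" using rk_mono[of AT XT indN] fAT sub eN by simp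
    have a5: "rank indN AT \<le> rank indN XT + card (AT - XT)"
      using rk_sub[OF assms(2) fAT sub] .
    have a6: "card AT = card XT + card (AT - XT)"
      using card_Diff_subset[OF fXT sub] card_mono[OF fAT sub] by simp
    have a7: "card XT - rank indN XT \<le> rank indM S - card XS"
      using lam a2 unfolding nullity_def ranklack_def by simp
    show "rank L A \<le> rank indM AS + rank indN AT + k"
      using X(3) cX a1 a3 a4 a5 a6 a7 rASS rATc unfolding k_def by linarith
  next
    obtain I where I: "I \<subseteq> AS" "indM I" "card I = rank indM AS"
      using rk_obtain[of AS indM] fAS eM by blast
    obtain J where J: "J \<subseteq> AT" "indN J" "card J = rank indN AT"
      using rk_obtain[of AT indN] fAT eN by blast
    have "card (AT - J) = card AT - card J" using card_Diff_subset[OF _ J(1)] fAT finite_subset J(1) by blast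
    then have "k \<le> card (AT - J)" using J(3) unfolding k_def by simp
    then obtain K where K: "K \<subseteq> AT - J" "card K = k"
      using obtain_subset_with_card_n by blast
    define X where "X = I \<union> (J \<union> K)"
    have fI: "finite I" using I fAS finite_subset by blast
    have fJ: "finite J" using J fAT finite_subset by blast
    have fK: "finite K" using K fAT finite_subset by blast
    have XS: "X \<inter> S = I" using I J K assms(3) AS_def AT_def X_def by auto
    have XT: "X \<inter> T = J \<union> K" using I J K assms(3) AS_def AT_def X_def by auto
    have XA: "X \<subseteq> A" using I J K AS_def AT_def X_def by auto
    have cJK: "card (J \<union> K) = card J + k" using K fJ fK card_Un_disjoint[of J K] by auto
    have JKsub: "J \<union> K \<subseteq> AT" using J K by auto
    have fJK: "finite (J \<union> K)" using fJ fK by simp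
    have rJK: "rank indN (J \<union> K) = card J"
      using rk_mono[of AT "J \<union> K" indN] fAT JKsub eN rk_ge[of "J \<union> K" J indN] fJK J(2) J(3) by fastforce
    have rI: "rank indM I = card I" using rk_indep'[of I indM] fI I(2) eM by simp
    have LX: "L X"
      unfolding L_def free_product_indep_def XS XT nullity_def ranklack_def
      using XA assms(4) I(2) rI rJK cJK I(3) unfolding k_def by auto
    have cX: "card X = card I + (card J + k)"
    proof -
      have "I \<inter> (J \<union> K) = {}" using I J K assms(3) AS_def AT_def by auto
      then have "card X = card I + card (J \<union> K)"
        unfolding X_def using fI fJK by (simp add: card_Un_disjoint)
      then show ?thesis using cJK by simp
    qed
    show "rank indM AS + rank indN AT + k \<le> rank L A"
      using rk_ge[of A X L] fA XA LX cX I(3) J(3) by simp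
  qed
  show ?thesis using goal unfolding L_def AS_def AT_def k_def ranklack_def nullity_def .
qed

end
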